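(* The map $\pi\mapsto\mathbf w(\pi)$ is a bijection from the set of extended link patterns on $\{1,\dots,N\}$ to the set of words of length $N$ (elements of $\{0,1\}^N$).
   Context: A link pattern on a finite totally ordered set is a partition of it into pairs that are pairwise noncrossing (no $i<j<k<\ell$ with $\{i,k\}$ and $\{j,\ell\}$ both pairs). An extended link pattern $\pi$ on $\{1,\dots,N\}$ consists of integers $1\le\ell_1<\dots<\ell_a$ (left points) and $r_1<\dots<r_b\le N$ (right points), $a,b\ge 0$, with $\ell_a<r_1$ when both are present, together with a link pattern on each maximal interval of integers of $\{1,\dots,N\}$ containing none of the left or right points. The word $\mathbf w(\pi)=w_1\cdots w_N$ is defined by $w_{\ell_k}=1$ for left points, $w_{r_k}=0$ for right points, and, for each pair $\{i,j\}$ with $i<j$ of one of the link patterns, $w_i=0$ and $w_j=1$. *)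

theory Defs
  imports Main
begin

definition link_pattern :: "nat set \<Rightarrow> nat set set \<Rightarrow> bool" where
  "link_pattern S P \<longleftrightarrow>
     \<Union>P = S \<and>
     (\<forall>p\<in>P. card p = 2) \<and>
     (\<forall>p\<in>P. \<forall>q\<in>P. p \<noteq> q \<longrightarrow> p \<inter> q = {}) \<and>
     \<not> (\<exists>i j k l. i < j \<and> j < k \<and> k < l \<and> {i, k} \<in> P \<and> {j, l} \<in> P)"

definition max_intervals :: "nat \<Rightarrow> nat set \<Rightarrow> nat set \<Rightarrow> nat set set" where
  "max_intervals N L R =
     {I. I \<noteq> {} \<and> (\<exists>a b. I = {a..b}) \<and> I \<subseteq> {1..N} - (L \<union> R) \<and>
         (\<forall>J. (\<exists>a b. J = {a..b}) \<and> I \<subseteq> J \<and> J \<subseteq> {1..N} - (L \<union> R) \<longrightarrow> J = I)}"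

text \<open>An extended link pattern on {1..N} is a triple (L, R, P): the set L of left points,
  the set R of right points (every left point smaller than every right point), and P,
  the union of the chosen link patterns on the maximal intervals (each block of P lies
  in one maximal interval, and its restriction to each maximal interval is a link pattern).\<close>
definition ext_link_patterns :: "nat \<Rightarrow> (nat set \<times> nat set \<times> nat set set) set" where
  "ext_link_patterns N =
     {(L, R, P). L \<subseteq> {1..N} \<and> R \<subseteq> {1..N} \<and> (\<forall>l\<in>L. \<forall>r\<in>R. l < r) \<and>
        (\<forall>I\<in>max_intervals N L R. link_pattern I {p\<in>P. p \<subseteq> I}) \<and>
        (\<forall>p\<in>P. \<exists>I\<in>max_intervals N L R. p \<subseteq> I)}"

text \<open>The word w(pi) = w_1 ... w_N, as a list of length N (position k of {1..N} is entry k-1).\<close>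
definition word :: "nat \<Rightarrow> nat set \<times> nat set \<times> nat set set \<Rightarrow> nat list" where
  "word N \<pi> = (case \<pi> of (L, R, P) \<Rightarrow>
     map (\<lambda>k. if k \<in> L then 1 else if k \<in> R then 0
               else if (\<exists>p\<in>P. k \<in> p \<and> k = Max p) then 1 else 0) [1..<N+1])"

end

theory Submission
  imports Defs
begin

definition Sset :: "nat \<Rightarrow> nat set \<Rightarrow> nat set \<Rightarrow> nat set" where
  "Sset N L R = {1..N} - (L \<union> R)"

lemma mi_char:
  assumes "I \<in> max_intervals N L R"
  shows "\<exists>a b. a \<le> b \<and> I = {a..b} \<and> I \<subseteq> Sset N L R"
proof -
  have I: "I \<noteq> {}" "\<exists>a b. I = {a..b}" "I \<subseteq> Sset N L R"
    using assms unfolding max_intervals_def Sset_def by auto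
  then obtain a b where ab: "I = {a..b}" by blast
  hence "a \<le> b" using I(1) by auto
  thus ?thesis using ab I(3) by blast
qed

lemma mi_max:
  assumes "I \<in> max_intervals N L R" "I \<subseteq> {a..b}" "{a..b} \<subseteq> Sset N L R"
  shows "{a..b} = I"
  using assms unfolding max_intervals_def Sset_def by blast

lemma mi_overlap:
  assumes "I1 \<in> max_intervals N L R" "I2 \<in> max_intervals N L R" "x \<in> I1" "x \<in> I2"
  shows "I1 = I2"
proof -
  obtain a b where ab: "a \<le> b" "I1 = {a..b}" "I1 \<subseteq> Sset N L R" using mi_char[OF assms(1)] by blast
  obtain c d where cd: "c \<le> d" "I2 = {c..d}" "I2 \<subseteq> Sset N L R" using mi_char[OF assms(2)] by blast
  have U: "{min a c..max b d} = I1 \<union> I2" using ab cd assms(3,4) by auto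
  have sub: "{min a c..max b d} \<subseteq> Sset N L R" using U ab cd by blast
  have "{min a c..max b d} = I1" using mi_max[OF assms(1) _ sub] U by blast
  moreover have "{min a c..max b d} = I2" using mi_max[OF assms(2) _ sub] U by blast
  ultimately show ?thesis by simp
qed

lemma mi_exists:
  assumes "c \<le> d" "{c..d} \<subseteq> Sset N L R"
  shows "\<exists>I\<in>max_intervals N L R. {c..d} \<subseteq> I"
proof -
  define Q where "Q = (\<lambda>(a::nat,b::nat). {c..d} \<subseteq> {a..b} \<and> {a..b} \<subseteq> Sset N L R)"
  have Q0: "Q (c,d)" using assms unfolding Q_def by auto
  have bnd: "\<forall>y. Q y \<longrightarrow> (\<lambda>(a,b). b - a) y < Suc N"
  proof (intro allI impI)
    fix y assume "Q y"
    then obtain a b where y: "y = (a,b)" "{c..d} \<subseteq> {a..b}" "{a..b} \<subseteq> Sset N L R"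
      unfolding Q_def by auto
    have "b \<in> {a..b}" using y assms(1) by auto
    hence "b \<le> N" using y unfolding Sset_def by auto
    thus "(\<lambda>(a,b). b - a) y < Suc N" using y by auto
  qed
  obtain x where x: "Q x" "\<forall>y. Q y \<longrightarrow> (\<lambda>(a,b). b - a) y \<le> (\<lambda>(a,b). b - a) x"
    using ex_has_greatest_nat[OF Q0 bnd] by blast
  obtain a b where ab: "x = (a,b)" by fastforce
  have qa: "{c..d} \<subseteq> {a..b}" "{a..b} \<subseteq> Sset N L R" using x(1) ab unfolding Q_def by auto
  have le: "a \<le> c" "d \<le> b" using qa(1) assms(1) by auto
  have "{a..b} \<in> max_intervals N L R"
    unfolding max_intervals_def
  proof (intro CollectI conjI allI impI)
    show "{a..b} \<noteq> {}" using le assms(1) by auto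
    show "\<exists>a' b'. {a..b} = {a'..b'}" by blast
    show "{a..b} \<subseteq> {1..N} - (L \<union> R)" using qa(2) unfolding Sset_def by simp
    fix J assume J: "(\<exists>a b. J = {a..b}) \<and> {a..b} \<subseteq> J \<and> J \<subseteq> {1..N} - (L \<union> R)"
    then obtain a' b' where J': "J = {a'..b'}" by blast
    have "a \<in> J" "b \<in> J" using J le assms(1) by auto
    hence ab': "a' \<le> a" "b \<le> b'" using J' by auto
    have "Q (a',b')" using J J' qa unfolding Q_def Sset_def by auto
    hence "b' - a' \<le> b - a" using x(2) ab by fastforce
    hence "a' = a" "b' = b" using ab' le assms(1) by auto
    thus "J = {a..b}" using J' by simp
  qed
  thus ?thesis using qa by blast
qed


primrec ht :: "(nat \<Rightarrow> nat) \<Rightarrow> nat \<Rightarrow> int" where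
  "ht g 0 = 0"
| "ht g (Suc k) = ht g k + (if g (Suc k) = 0 then 1 else -1)"

lemma ht_step: "1 \<le> k \<Longrightarrow> ht g k = ht g (k-1) + (if g k = 0 then 1 else -1)"
  by (cases k) auto

definition wf :: "nat set \<Rightarrow> nat set \<Rightarrow> nat set set \<Rightarrow> nat \<Rightarrow> nat" where
  "wf L R P k = (if k \<in> L then 1 else if k \<in> R then 0
               else if (\<exists>p\<in>P. k \<in> p \<and> k = Max p) then 1 else 0)"

lemma word_alt: "word N (L,R,P) = map (wf L R P) [1..<N+1]"
  by (simp add: word_def wf_def)

lemma word_nth: "1 \<le> k \<Longrightarrow> k \<le> N \<Longrightarrow> word N (L,R,P) ! (k-1) = wf L R P k"
  by (simp add: word_alt del: upt_Suc)

lemma ext_iff: "(L,R,P) \<in> ext_link_patterns N \<longleftrightarrow>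
   L \<subseteq> {1..N} \<and> R \<subseteq> {1..N} \<and> (\<forall>l\<in>L. \<forall>r\<in>R. l < r) \<and>
        (\<forall>I\<in>max_intervals N L R. link_pattern I {p\<in>P. p \<subseteq> I}) \<and>
        (\<forall>p\<in>P. \<exists>I\<in>max_intervals N L R. p \<subseteq> I)"
  by (simp add: ext_link_patterns_def)

locale elp =
  fixes N :: nat and L R :: "nat set" and P :: "nat set set" and g :: "nat \<Rightarrow> nat"
  assumes mem: "(L,R,P) \<in> ext_link_patterns N"
    and gw: "\<And>k. 1 \<le> k \<Longrightarrow> k \<le> N \<Longrightarrow> g k = wf L R P k"
begin

lemma LR: "L \<subseteq> {1..N}" "R \<subseteq> {1..N}" "\<And>l r. l \<in> L \<Longrightarrow> r \<in> R \<Longrightarrow> l < r"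
  "\<And>I. I \<in> max_intervals N L R \<Longrightarrow> link_pattern I {p\<in>P. p \<subseteq> I}"
  "\<And>p. p \<in> P \<Longrightarrow> \<exists>I\<in>max_intervals N L R. p \<subseteq> I"
  using mem unfolding ext_iff by auto

lemma F1: "L \<inter> R = {}"
  using LR(3) by fastforce

lemma F2: assumes "p \<in> P" shows "\<exists>a b. a < b \<and> p = {a,b} \<and> {a..b} \<subseteq> Sset N L R"
proof -
  obtain I where I: "I \<in> max_intervals N L R" "p \<subseteq> I" using LR(5)[OF assms] by blast
  have "card p = 2" using LR(4)[OF I(1)] assms I(2) unfolding link_pattern_def by auto
  then obtain x y where xy: "p = {x,y}" "x \<noteq> y" by (auto simp: card_2_iff)
  obtain c d where cd: "c \<le> d" "I = {c..d}" "I \<subseteq> Sset N L R" using mi_char[OF I(1)] by blast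
  show ?thesis
  proof (cases "x < y")
    case True
    have "{x..y} \<subseteq> I" using I(2) xy cd by auto
    thus ?thesis using True xy cd by blast
  next
    case False
    hence "y < x" using xy by auto
    moreover have "{y..x} \<subseteq> I" using I(2) xy cd by auto
    ultimately show ?thesis using xy cd by blast
  qed
qed

lemma F3: assumes "x \<in> Sset N L R" shows "\<exists>p\<in>P. x \<in> p"
proof -
  obtain I where I: "I \<in> max_intervals N L R" "{x..x} \<subseteq> I" using mi_exists[of x x N L R] assms by auto
  have "\<Union>{p\<in>P. p \<subseteq> I} = I" using LR(4)[OF I(1)] unfolding link_pattern_def by auto
  thus ?thesis using I(2) by auto
qed

lemma F4: assumes "p \<in> P" "q \<in> P" "x \<in> p" "x \<in> q" shows "p = q"
proof -
  obtain I where I: "I \<in> max_intervals N L R" "p \<subseteq> I" using LR(5)[OF assms(1)] by blast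
  obtain J where J: "J \<in> max_intervals N L R" "q \<subseteq> J" using LR(5)[OF assms(2)] by blast
  have "I = J" using mi_overlap[OF I(1) J(1)] I J assms by auto
  thus ?thesis using LR(4)[OF I(1)] assms I J unfolding link_pattern_def by blast
qed

lemma F5: assumes "{i,k} \<in> P" "{j,l} \<in> P" "i < j" "j < k" "k < l" shows False
proof -
  obtain I where I: "I \<in> max_intervals N L R" "{i,k} \<subseteq> I" using LR(5)[OF assms(1)] by blast
  obtain J where J: "J \<in> max_intervals N L R" "{j,l} \<subseteq> J" using LR(5)[OF assms(2)] by blast
  obtain c d where cd: "I = {c..d}" using mi_char[OF I(1)] by blast
  have "j \<in> I" using I(2) cd assms by auto
  hence "I = J" using mi_overlap[OF I(1) J(1)] J by auto
  thus False using LR(4)[OF I(1)] assms I J unfolding link_pattern_def by blast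
qed

lemma pairD: assumes "{a,b} \<in> P" "a < b"
  shows "{a..b} \<subseteq> Sset N L R" "g a = 0" "g b = 1" "1 \<le> a" "b \<le> N"
proof -
  obtain u v where uv: "u < v" "{a,b} = {u,v}" "{u..v} \<subseteq> Sset N L R" using F2[OF assms(1)] by blast
  have e: "u = a" "v = b" using uv(1,2) assms(2) by (auto simp: doubleton_eq_iff)
  show S: "{a..b} \<subseteq> Sset N L R" using uv e by simp
  have aS: "a \<in> Sset N L R" "b \<in> Sset N L R" using S assms(2) by auto
  thus "1 \<le> a" "b \<le> N" unfolding Sset_def by auto
  have "Max {a,b} = b" using assms(2) by simp
  hence "\<exists>p\<in>P. b \<in> p \<and> b = Max p" using assms(1) by (intro bexI[of _ "{a,b}"]) auto
  hence "wf L R P b = 1" using aS unfolding wf_def Sset_def by auto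
  thus "g b = 1" using gw aS unfolding Sset_def by auto
  have "\<not> (\<exists>p\<in>P. a \<in> p \<and> a = Max p)"
  proof
    assume "\<exists>p\<in>P. a \<in> p \<and> a = Max p"
    then obtain p where p: "p \<in> P" "a \<in> p" "a = Max p" by blast
    have "p = {a,b}" using F4[OF p(1) assms(1)] p by auto
    hence "Max p = b" using assms(2) by simp
    thus False using p assms(2) by simp
  qed
  hence "wf L R P a = 0" using aS unfolding wf_def Sset_def by auto
  thus "g a = 0" using gw aS unfolding Sset_def by auto
qed

end


context elp begin

definition closed :: "nat \<Rightarrow> nat \<Rightarrow> bool" where
  "closed c d \<longleftrightarrow> (\<forall>x\<in>{c..d}. \<exists>y\<in>{c..d}. x \<noteq> y \<and> {x,y} \<in> P)"

lemma inner_closed: assumes "{c,y} \<in> P" "c < y" shows "closed (c+1) (y-1)"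
  unfolding closed_def
proof
  fix x assume x: "x \<in> {c+1..y-1}"
  have "x \<in> Sset N L R" using pairD(1)[OF assms] x by auto
  then obtain p where p: "p \<in> P" "x \<in> p" using F3 by blast
  obtain u v where uv: "u < v" "p = {u,v}" using F2[OF p(1)] by blast
  obtain z where z: "p = {x,z}" "x \<noteq> z" using uv p(2) by auto
  have zc: "z \<noteq> c" "z \<noteq> y"
  proof -
    show "z \<noteq> c"
    proof
      assume "z = c" hence "p = {c,y}" using F4[OF p(1) assms(1)] z by auto
      thus False using x z assms(2) by (auto simp: doubleton_eq_iff)
    qed
    show "z \<noteq> y"
    proof
      assume "z = y" hence "p = {c,y}" using F4[OF p(1) assms(1)] z by auto
      thus False using x z assms(2) by (auto simp: doubleton_eq_iff)
    qed
  qed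
  have "\<not> z < c"
  proof
    assume "z < c"
    have "{z,x} \<in> P" using p(1) z by (simp add: insert_commute)
    have "c < x" "x < y" using x assms(2) by auto
    from F5[OF \<open>{z,x} \<in> P\<close> assms(1) \<open>z < c\<close> \<open>c < x\<close> \<open>x < y\<close>] show False .
  qed
  moreover have "\<not> y < z"
  proof
    assume "y < z"
    have "c < x" "x < y" using x assms(2) by auto
    have "{x,z} \<in> P" using p z by simp
    from F5[OF assms(1) this \<open>c < x\<close> \<open>x < y\<close> \<open>y < z\<close>] show False .
  qed
  ultimately have "z \<in> {c+1..y-1}" using zc by auto
  moreover have "{x,z} \<in> P" using z p by simp
  ultimately show "\<exists>y\<in>{c+1..y-1}. x \<noteq> y \<and> {x,y} \<in> P" using z(2) by blast
qed

lemma bal: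
  "closed c d \<Longrightarrow> c \<le> d+1 \<Longrightarrow> 1 \<le> c \<Longrightarrow>
     ht g d = ht g (c-1) \<and> (\<forall>m\<in>{c-1..d}. ht g (c-1) \<le> ht g m)"
proof (induction "d+1-c" arbitrary: c d rule: less_induct)
  case less
  show ?case
  proof (cases "c = d+1")
    case True
    thus ?thesis by auto
  next
    case False
    hence cd: "c \<le> d" using less.prems by auto
    have "c \<in> {c..d}" using cd by simp
    then obtain y where y: "y \<in> {c..d}" "c \<noteq> y" "{c,y} \<in> P"
      using less.prems(1) unfolding closed_def by blast
    have cy: "c < y" using y by auto
    have pd: "g c = 0" "g y = 1" using pairD[OF y(3) cy] by auto
    have inner: "ht g (y-1) = ht g c \<and> (\<forall>m\<in>{c..y-1}. ht g c \<le> ht g m)"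
      using less.hyps[where c="c+1" and d="y-1"] inner_closed[OF y(3) cy] cy y less.prems by auto
    have tail: "closed (y+1) d"
      unfolding closed_def
    proof
      fix x assume x: "x \<in> {y+1..d}"
      have "x \<in> {c..d}" using x y by auto
      then obtain z where z: "z \<in> {c..d}" "x \<noteq> z" "{x,z} \<in> P"
        using less.prems(1) unfolding closed_def by blast
      have "z \<noteq> c" "z \<noteq> y"
      proof -
        show "z \<noteq> c"
        proof
          assume "z = c" hence "{x,z} = {c,y}" using F4[OF z(3) y(3)] by auto
          thus False using x z cy by (auto simp: doubleton_eq_iff)
        qed
        show "z \<noteq> y"
        proof
          assume "z = y" hence "{x,z} = {c,y}" using F4[OF z(3) y(3)] by auto
          thus False using x z cy by (auto simp: doubleton_eq_iff)
        qed
      qed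
      moreover have "\<not> (c < z \<and> z < y)"
      proof
        assume "c < z \<and> z < y"
        have "{z,x} \<in> P" using z(3) by (simp add: insert_commute)
        thus False using F5[of c y z x] y \<open>c < z \<and> z < y\<close> x by auto
      qed
      ultimately have "z \<in> {y+1..d}" using z x by auto
      thus "\<exists>z\<in>{y+1..d}. x \<noteq> z \<and> {x,z} \<in> P" using z by auto
    qed
    have tl: "ht g d = ht g y \<and> (\<forall>m\<in>{y..d}. ht g y \<le> ht g m)"
      using less.hyps[where c="y+1" and d=d] tail cy y less.prems by auto
    have s1: "ht g c = ht g (c-1) + 1" using ht_step[of c g] pd less.prems by simp
    have s2: "ht g y = ht g (y-1) - 1" using ht_step[of y g] pd cy by simp
    have "ht g y = ht g (c-1)" using s1 s2 inner by simp
    moreover have "\<forall>m\<in>{c-1..d}. ht g (c-1) \<le> ht g m"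
    proof
      fix m assume m: "m \<in> {c-1..d}"
      show "ht g (c-1) \<le> ht g m"
      proof (cases "m = c-1")
        case False
        show ?thesis
        proof (cases "m < y")
          case True
          hence "m \<in> {c..y-1}" using m False by auto
          thus ?thesis using inner s1 by force
        next
          case False
          hence "m \<in> {y..d}" using m by auto
          thus ?thesis using tl \<open>ht g y = ht g (c-1)\<close> by force
        qed
      qed simp
    qed
    ultimately show ?thesis using tl by simp
  qed
qed

lemma pairA: assumes "{a,b} \<in> P" "a < b"
  shows "ht g b = ht g (a-1)" "\<And>m. a \<le> m \<Longrightarrow> m < b \<Longrightarrow> ht g (a-1) < ht g m"
proof -
  have pd: "g a = 0" "g b = 1" "1 \<le> a" using pairD[OF assms] by auto
  have inner: "ht g (b-1) = ht g a \<and> (\<forall>m\<in>{a..b-1}. ht g a \<le> ht g m)"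
    using bal[OF inner_closed[OF assms]] assms pd by auto
  have s1: "ht g a = ht g (a-1) + 1" using ht_step[of a g] pd by simp
  have s2: "ht g b = ht g (b-1) - 1" using ht_step[of b g] pd assms by simp
  show "ht g b = ht g (a-1)" using s1 s2 inner by simp
  fix m assume "a \<le> m" "m < b"
  hence "m \<in> {a..b-1}" by auto
  thus "ht g (a-1) < ht g m" using inner s1 by force
qed

end


lemma (in elp) wfL: assumes "k \<in> L" shows "g k = 1"
proof -
  have "1 \<le> k" "k \<le> N" using LR(1) assms by auto
  thus ?thesis using gw assms unfolding wf_def by simp
qed
lemma (in elp) wfR: assumes "k \<in> R" shows "g k = 0"
proof -
  have "1 \<le> k" "k \<le> N" using LR(2) assms by auto
  moreover have "k \<notin> L" using F1 assms by blast
  ultimately show ?thesis using gw assms unfolding wf_def by simp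
qed
lemma (in elp) pair_of: assumes "x \<in> Sset N L R"
  shows "\<exists>a b. a < b \<and> {a,b} \<in> P \<and> (x = a \<or> x = b)"
proof -
  obtain p where p: "p \<in> P" "x \<in> p" using F3[OF assms] by blast
  obtain a b where "a < b" "p = {a,b}" using F2[OF p(1)] by blast
  thus ?thesis using p by blast
qed

lemma P_sub:
  assumes e1: "elp N L1 R1 P1 g" and e2: "elp N L2 R2 P2 g"
  shows "P1 \<subseteq> P2"
proof
  fix p assume p: "p \<in> P1"
  obtain i j where ij: "i < j" "p = {i,j}" using elp.F2[OF e1 p] by blast
  have P1ij: "{i,j} \<in> P1" using p ij by simp
  note A1 = elp.pairA[OF e1 P1ij ij(1)]
  note D1 = elp.pairD[OF e1 P1ij ij(1)]
  show "p \<in> P2"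
  proof (cases "i \<in> Sset N L2 R2")
    case True
    then obtain u v where uv: "u < v" "{u,v} \<in> P2" "i = u \<or> i = v"
      using elp.pair_of[OF e2] by blast
    have "i \<noteq> v" using elp.pairD(3)[OF e2 uv(2,1)] D1(2) by auto
    hence iu: "i = u" using uv by auto
    note A2 = elp.pairA[OF e2 uv(2,1)]
    have "\<not> j < v"
    proof
      assume "j < v"
      hence "ht g (u-1) < ht g j" using A2(2)[of j] iu ij by simp
      thus False using A1(1) iu by simp
    qed
    moreover have "\<not> v < j"
    proof
      assume "v < j"
      hence "ht g (i-1) < ht g v" using A1(2)[of v] iu uv by simp
      thus False using A2(1) iu by simp
    qed
    ultimately have "v = j" by auto
    thus ?thesis using uv iu ij by simp
  next
    case iS: False
    show ?thesis
    proof (cases "j \<in> Sset N L2 R2")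
      case True
      then obtain u v where uv: "u < v" "{u,v} \<in> P2" "j = u \<or> j = v"
        using elp.pair_of[OF e2] by blast
      have "j \<noteq> u" using elp.pairD(2)[OF e2 uv(2,1)] D1(3) by auto
      hence jv: "j = v" using uv by auto
      note A2 = elp.pairA[OF e2 uv(2,1)]
      have S2: "{u..v} \<subseteq> Sset N L2 R2" using elp.pairD(1)[OF e2 uv(2,1)] .
      have "u \<in> {u..v}" using uv by simp
      hence "u \<noteq> i" using S2 iS by blast
      moreover have "\<not> u < i"
      proof
        assume "u < i"
        hence "i \<in> {u..v}" using ij jv by simp
        thus False using S2 iS by blast
      qed
      moreover have "\<not> i < u"
      proof
        assume "i < u"
        hence "ht g (i-1) < ht g (u-1)" using A1(2)[of "u-1"] uv jv by auto
        thus False using A1(1) A2(1) jv by simp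
      qed
      ultimately show ?thesis by auto
    next
      case jS: False
      have rng: "1 \<le> i" "j \<le> N" using D1 by auto
      have "i \<in> L2 \<union> R2" using iS rng ij unfolding Sset_def by auto
      moreover have "i \<notin> L2" using elp.wfL[OF e2, of i] D1(2) by auto
      ultimately have iR: "i \<in> R2" by auto
      have "j \<in> L2 \<union> R2" using jS rng ij unfolding Sset_def by auto
      moreover have "j \<notin> R2" using elp.wfR[OF e2, of j] D1(3) by auto
      ultimately have jL: "j \<in> L2" by auto
      have "j < i" using elp.LR(3)[OF e2 jL iR] .
      thus ?thesis using ij by simp
    qed
  qed
qed

lemma (in elp) cover: "\<Union>P \<inter> (L \<union> R) = {}"
proof -
  { fix p x assume "p \<in> P" "x \<in> p"
    then obtain a b where "a < b" "p = {a,b}" "{a..b} \<subseteq> Sset N L R" using F2[OF \<open>p \<in> P\<close>] by blast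
    hence "x \<in> {a..b}" using \<open>x \<in> p\<close> by auto
    hence "x \<in> Sset N L R" using \<open>{a..b} \<subseteq> Sset N L R\<close> by blast
    hence "x \<notin> L \<union> R" unfolding Sset_def by simp }
  thus ?thesis by blast
qed

lemma LR_sub:
  assumes e1: "elp N L1 R1 P g" and e2: "elp N L2 R2 P g"
  shows "L1 \<subseteq> L2" "R1 \<subseteq> R2"
proof -
  show "L1 \<subseteq> L2"
  proof
    fix k assume k: "k \<in> L1"
    have "k \<notin> \<Union>P" using elp.cover[OF e1] k by auto
    hence "k \<notin> Sset N L2 R2" using elp.F3[OF e2] by blast
    moreover have "k \<in> {1..N}" using elp.LR(1)[OF e1] k by auto
    ultimately have "k \<in> L2 \<union> R2" unfolding Sset_def by auto
    moreover have "g k = 1" using elp.wfL[OF e1 k] .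
    moreover have "k \<notin> R2" using elp.wfR[OF e2, of k] \<open>g k = 1\<close> by auto
    ultimately show "k \<in> L2" by blast
  qed
  show "R1 \<subseteq> R2"
  proof
    fix k assume k: "k \<in> R1"
    have "k \<notin> \<Union>P" using elp.cover[OF e1] k by auto
    hence "k \<notin> Sset N L2 R2" using elp.F3[OF e2] by blast
    moreover have "k \<in> {1..N}" using elp.LR(2)[OF e1] k by auto
    ultimately have "k \<in> L2 \<union> R2" unfolding Sset_def by auto
    moreover have "g k = 0" using elp.wfR[OF e1 k] .
    moreover have "k \<notin> L2" using elp.wfL[OF e2, of k] \<open>g k = 0\<close> by auto
    ultimately show "k \<in> R2" by blast
  qed
qed

lemma elp_intro: assumes "(L,R,P) \<in> ext_link_patterns N"
  shows "elp N L R P (\<lambda>k. word N (L,R,P) ! (k-1))"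
proof (unfold_locales)
  show "(L,R,P) \<in> ext_link_patterns N" by (rule assms)
  fix k :: nat assume "1 \<le> k" "k \<le> N"
  thus "word N (L,R,P) ! (k-1) = wf L R P k" by (rule word_nth)
qed

lemma inj_word: "inj_on (word N) (ext_link_patterns N)"
proof (rule inj_onI)
  fix x y assume x: "x \<in> ext_link_patterns N" and y: "y \<in> ext_link_patterns N"
    and eq: "word N x = word N y"
  obtain L1 R1 P1 where x': "x = (L1,R1,P1)" by (cases x) auto
  obtain L2 R2 P2 where y': "y = (L2,R2,P2)" by (cases y) auto
  define g where "g = (\<lambda>k. word N x ! (k-1))"
  have e1: "elp N L1 R1 P1 g" using elp_intro[of L1 R1 P1 N] x x' g_def by simp
  have e2: "elp N L2 R2 P2 g" using elp_intro[of L2 R2 P2 N] y y' g_def eq by simp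
  have "P1 = P2" using P_sub[OF e1 e2] P_sub[OF e2 e1] by auto
  hence e2': "elp N L2 R2 P1 g" using e2 by simp
  have "L1 = L2" "R1 = R2" using LR_sub[OF e1 e2'] LR_sub[OF e2' e1] by auto
  thus "x = y" using x' y' \<open>P1 = P2\<close> by simp
qed


lemma ht_diff: "ht g (Suc m) = ht g m + 1 \<or> ht g (Suc m) = ht g m - 1"
  by simp

locale wd =
  fixes N :: nat and g :: "nat \<Rightarrow> nat"
  assumes g01: "\<And>k. 1 \<le> k \<Longrightarrow> k \<le> N \<Longrightarrow> g k = 0 \<or> g k = 1"
begin

definition isp :: "nat \<Rightarrow> nat \<Rightarrow> bool" where
  "isp i j \<longleftrightarrow> 1 \<le> i \<and> i < j \<and> j \<le> N \<and> ht g j = ht g (i-1) \<and>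
     (\<forall>m. i \<le> m \<and> m < j \<longrightarrow> ht g (i-1) < ht g m)"

definition PP :: "nat set set" where
  "PP = {{i,j} | i j. isp i j}"

definition LL :: "nat set" where
  "LL = {k. 1 \<le> k \<and> k \<le> N \<and> g k = 1 \<and> (\<forall>m<k. ht g k < ht g m)}"

definition RR :: "nat set" where
  "RR = {k. 1 \<le> k \<and> k \<le> N \<and> g k = 0 \<and> (\<forall>m. k \<le> m \<and> m \<le> N \<longrightarrow> ht g (k-1) < ht g m)}"

lemma ispD: assumes "isp i j"
  shows "1 \<le> i" "i < j" "j \<le> N" "ht g j = ht g (i-1)"
    "\<And>m. i \<le> m \<Longrightarrow> m < j \<Longrightarrow> ht g (i-1) < ht g m"
  using assms unfolding isp_def by auto

lemma isp_g: assumes "isp i j" shows "g i = 0" "g j = 1"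
proof -
  have a: "1 \<le> i" "i < j" "j \<le> N" "ht g j = ht g (i-1)"
    "\<And>m. i \<le> m \<Longrightarrow> m < j \<Longrightarrow> ht g (i-1) < ht g m"
    using assms unfolding isp_def by auto
  have "ht g (i-1) < ht g i" using a(5)[of i] a(2) by simp
  thus "g i = 0" using ht_step[of i g] a(1) by (auto split: if_splits)
  have "ht g (i-1) < ht g (j-1)" using a(5)[of "j-1"] a(2) by simp
  moreover have "ht g j = ht g (j-1) + (if g j = 0 then 1 else -1)" using ht_step[of j g] a by simp
  ultimately have "g j \<noteq> 0" using a(4) by (auto split: if_splits)
  thus "g j = 1" using g01[of j] a by auto
qed

lemma isp_mem: assumes "{a,b} \<in> PP" "a < b" shows "isp a b"
proof -
  obtain i j where ij: "{a,b} = {i,j}" "isp i j" using assms(1) unfolding PP_def by blast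
  have "i < j" using ij(2) unfolding isp_def by simp
  hence "i = a" "j = b" using ij(1) assms(2) by (auto simp: doubleton_eq_iff)
  thus ?thesis using ij by simp
qed

lemma uniq_r: assumes "isp i j" "isp i j'" shows "j = j'"
proof (rule ccontr)
  assume "j \<noteq> j'"
  hence "j < j' \<or> j' < j" by auto
  thus False
  proof
    assume "j < j'"
    hence "ht g (i-1) < ht g j" using ispD(5)[OF assms(2), of j] ispD(2)[OF assms(1)] by simp
    thus False using ispD(4)[OF assms(1)] by simp
  next
    assume "j' < j"
    hence "ht g (i-1) < ht g j'" using ispD(5)[OF assms(1), of j'] ispD(2)[OF assms(2)] by simp
    thus False using ispD(4)[OF assms(2)] by simp
  qed
qed

lemma uniq_l: assumes "isp i j" "isp i' j" shows "i = i'"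
proof (rule ccontr)
  assume "i \<noteq> i'"
  hence "i < i' \<or> i' < i" by auto
  thus False
  proof
    assume "i < i'"
    hence "ht g (i-1) < ht g (i'-1)" using ispD(5)[OF assms(1), of "i'-1"] ispD(2)[OF assms(2)] by simp
    thus False using ispD(4)[OF assms(1)] ispD(4)[OF assms(2)] by simp
  next
    assume "i' < i"
    hence "ht g (i'-1) < ht g (i-1)" using ispD(5)[OF assms(2), of "i-1"] ispD(2)[OF assms(1)] by simp
    thus False using ispD(4)[OF assms(1)] ispD(4)[OF assms(2)] by simp
  qed
qed

lemma exists_closer: assumes "1 \<le> k" "k \<le> N" "g k = 1" "k \<notin> LL" shows "\<exists>i. isp i k"
proof -
  have "\<not> (\<forall>m<k. ht g k < ht g m)" using assms unfolding LL_def by simp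
  hence "\<exists>m<k. ht g m \<le> ht g k" by (simp add: not_less)
  then obtain m1 where m1: "m1 < k" "ht g m1 \<le> ht g k" by blast
  define Q where "Q = (\<lambda>m. m < k \<and> ht g m \<le> ht g k)"
  have "Q m1" using m1 Q_def by simp
  moreover have "\<forall>y. Q y \<longrightarrow> id y < k" unfolding Q_def by simp
  ultimately obtain m0 where m0: "Q m0" "\<forall>y. Q y \<longrightarrow> id y \<le> id m0"
    using ex_has_greatest_nat[of Q m1 id k] by blast
  have m0': "m0 < k" "ht g m0 \<le> ht g k" using m0(1) Q_def by auto
  have above: "ht g k < ht g m" if "m0 < m" "m < k" for m
  proof (rule ccontr)
    assume "\<not> ht g k < ht g m"
    hence "Q m" using that unfolding Q_def by simp
    hence "m \<le> m0" using m0(2) by simp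
    thus False using that by simp
  qed
  have sk: "ht g k = ht g (k-1) - 1" using ht_step[of k g] assms by simp
  have "m0 \<noteq> k - 1" using sk m0' by auto
  hence lt: "m0 + 1 < k" using m0' by auto
  have "ht g k < ht g (Suc m0)" using above[of "Suc m0"] lt by simp
  hence eq: "ht g m0 = ht g k" using ht_diff[of g m0] m0' by auto
  have "isp (m0+1) k" unfolding isp_def using lt assms eq above by auto
  thus ?thesis by blast
qed

lemma exists_opener: assumes "1 \<le> k" "k \<le> N" "g k = 0" "k \<notin> RR" shows "\<exists>j. isp k j"
proof -
  have "\<not> (\<forall>m. k \<le> m \<and> m \<le> N \<longrightarrow> ht g (k-1) < ht g m)" using assms unfolding RR_def by simp
  hence "\<exists>m. k \<le> m \<and> m \<le> N \<and> ht g m \<le> ht g (k-1)" by (auto simp: not_less)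
  define Q where "Q = (\<lambda>m. k \<le> m \<and> m \<le> N \<and> ht g m \<le> ht g (k-1))"
  have ex: "\<exists>m. Q m" using \<open>\<exists>m. _\<close> Q_def by simp
  define j where "j = (LEAST m. Q m)"
  have Qj: "Q j" using LeastI_ex[OF ex] j_def by simp
  have below: "\<And>m. m < j \<Longrightarrow> \<not> Q m" using not_less_Least j_def by blast
  have sk: "ht g k = ht g (k-1) + 1" using ht_step[of k g] assms by simp
  have "j \<noteq> k" using Qj sk Q_def by auto
  hence kj: "k < j" using Qj Q_def by auto
  have above: "ht g (k-1) < ht g m" if "k \<le> m" "m < j" for m
  proof (rule ccontr)
    assume "\<not> ht g (k-1) < ht g m"
    moreover have "m \<le> N" using that Qj Q_def by simp
    ultimately have "Q m" using that unfolding Q_def by simp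
    thus False using below that by simp
  qed
  have "ht g (k-1) < ht g (j-1)" using above[of "j-1"] kj by simp
  moreover have "ht g j = ht g (j-1) + 1 \<or> ht g j = ht g (j-1) - 1"
    using ht_diff[of g "j-1"] kj by (cases j) auto
  ultimately have "ht g j = ht g (k-1)" using Qj Q_def by auto
  hence "isp k j" unfolding isp_def using assms kj Qj Q_def above by auto
  thus ?thesis by blast
qed

lemma not_LR: assumes "isp i j" "i \<le> m" "m \<le> j" shows "m \<notin> LL" "m \<notin> RR"
proof -
  have a: "1 \<le> i" "i < j" "j \<le> N" "ht g j = ht g (i-1)"
    "\<And>m. i \<le> m \<Longrightarrow> m < j \<Longrightarrow> ht g (i-1) < ht g m"
    using assms unfolding isp_def by auto
  have ge: "\<And>m. i \<le> m \<Longrightarrow> m \<le> j \<Longrightarrow> ht g (i-1) \<le> ht g m"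
  proof -
    fix m assume m: "i \<le> m" "m \<le> j"
    show "ht g (i-1) \<le> ht g m"
    proof (cases "m = j")
      case True thus ?thesis using a(4) by simp
    next
      case False thus ?thesis using a(5)[of m] m by simp
    qed
  qed
  show "m \<notin> LL"
  proof
    assume "m \<in> LL"
    hence "ht g m < ht g (i-1)" unfolding LL_def using a(1) assms(2) by auto
    thus False using ge[OF assms(2,3)] by simp
  qed
  show "m \<notin> RR"
  proof
    assume "m \<in> RR"
    hence "ht g (m-1) < ht g j" unfolding RR_def using assms a by auto
    moreover have "ht g (i-1) \<le> ht g (m-1)"
    proof (cases "m = i")
      case False thus ?thesis using ge[of "m-1"] assms by auto
    qed simp
    ultimately show False using a(4) by simp
  qed
qed

lemma isp_S: assumes "isp i j" shows "{i..j} \<subseteq> Sset N LL RR"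
proof
  fix m assume m: "m \<in> {i..j}"
  hence "m \<notin> LL" "m \<notin> RR" using not_LR[OF assms] by auto
  moreover have "1 \<le> m" "m \<le> N" using m ispD(1,3)[OF assms] by auto
  ultimately show "m \<in> Sset N LL RR" unfolding Sset_def by simp
qed

lemma LR_order: assumes "l \<in> LL" "r \<in> RR" shows "l < r"
proof (rule ccontr)
  assume "\<not> l < r"
  moreover have "l \<noteq> r" using assms unfolding LL_def RR_def by auto
  ultimately have "r < l" by simp
  have lf: "\<forall>m<l. ht g l < ht g m" "l \<le> N" using assms(1) unfolding LL_def by auto
  have rf: "\<forall>m. r \<le> m \<and> m \<le> N \<longrightarrow> ht g (r-1) < ht g m" using assms(2) unfolding RR_def by auto
  have "ht g l < ht g (r-1)" using lf \<open>r < l\<close> by simp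
  moreover have "ht g (r-1) < ht g l" using rf lf \<open>r < l\<close> by simp
  ultimately show False by simp
qed

lemma covered: assumes "x \<in> Sset N LL RR" shows "\<exists>i j. isp i j \<and> (x = i \<or> x = j)"
proof -
  have x: "1 \<le> x" "x \<le> N" "x \<notin> LL" "x \<notin> RR" using assms unfolding Sset_def by auto
  show ?thesis
  proof (cases "g x = 0")
    case True thus ?thesis using exists_opener[OF x(1,2) True x(4)] by blast
  next
    case False hence "g x = 1" using g01[OF x(1,2)] by simp
    from exists_closer[OF x(1,2) this x(3)] show ?thesis by blast
  qed
qed

lemma noncross: assumes "isp i k" "isp j l" "i < j" "j < k" "k < l" shows False
proof -
  have "ht g (i-1) < ht g (j-1)" using ispD(5)[OF assms(1), of "j-1"] assms(3,4) by simp
  moreover have "ht g (j-1) < ht g k" using ispD(5)[OF assms(2), of k] assms(4,5) by simp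
  ultimately show False using ispD(4)[OF assms(1)] by simp
qed

end


context wd begin

lemma PPD: assumes "p \<in> PP" obtains i j where "p = {i,j}" "isp i j"
  using assms unfolding PP_def by blast

lemma PP_in_mi: assumes "p \<in> PP" shows "\<exists>I\<in>max_intervals N LL RR. p \<subseteq> I"
proof -
  obtain i j where ij: "p = {i,j}" "isp i j" using PPD[OF assms] by blast
  have "i \<le> j" using ispD(2)[OF ij(2)] by simp
  then obtain I where "I \<in> max_intervals N LL RR" "{i..j} \<subseteq> I"
    using mi_exists[OF _ isp_S[OF ij(2)]] by blast
  moreover have "p \<subseteq> {i..j}" using ij \<open>i \<le> j\<close> by auto
  ultimately show ?thesis by blast
qed

lemma wf_eq: assumes "1 \<le> k" "k \<le> N" shows "wf LL RR PP k = g k"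
proof (cases "k \<in> LL")
  case True thus ?thesis unfolding wf_def LL_def by simp
next
  case nL: False
  show ?thesis
  proof (cases "k \<in> RR")
    case True thus ?thesis using nL unfolding wf_def RR_def by simp
  next
    case nR: False
    show ?thesis
    proof (cases "g k = 0")
      case True
      have "\<not> (\<exists>p\<in>PP. k \<in> p \<and> k = Max p)"
      proof
        assume "\<exists>p\<in>PP. k \<in> p \<and> k = Max p"
        then obtain p where p: "p \<in> PP" "k = Max p" by blast
        obtain i j where ij: "p = {i,j}" "isp i j" using PPD[OF p(1)] by blast
        have "Max p = j" using ij ispD(2)[OF ij(2)] by simp
        thus False using isp_g(2)[OF ij(2)] p True by simp
      qed
      thus ?thesis using nL nR True unfolding wf_def by simp
    next
      case False
      hence g1: "g k = 1" using g01[OF assms] by simp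
      obtain i where i: "isp i k" using exists_closer[OF assms g1 nL] by blast
      have "{i,k} \<in> PP" unfolding PP_def using i by blast
      moreover have "Max {i,k} = k" using ispD(2)[OF i] by simp
      ultimately have "\<exists>p\<in>PP. k \<in> p \<and> k = Max p" by (intro bexI[of _ "{i,k}"]) simp_all
      thus ?thesis using nL nR g1 unfolding wf_def by simp
    qed
  qed
qed

lemma link: assumes I: "I \<in> max_intervals N LL RR"
  shows "link_pattern I {p\<in>PP. p \<subseteq> I}"
  unfolding link_pattern_def
proof (intro conjI)
  show "\<Union>{p\<in>PP. p \<subseteq> I} = I"
  proof
    show "\<Union>{p\<in>PP. p \<subseteq> I} \<subseteq> I" by blast
    show "I \<subseteq> \<Union>{p\<in>PP. p \<subseteq> I}"
    proof
      fix x assume x: "x \<in> I"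
      have "x \<in> Sset N LL RR" using mi_char[OF I] x by blast
      then obtain i j where ij: "isp i j" "x = i \<or> x = j" using covered by blast
      have pP: "{i,j} \<in> PP" unfolding PP_def using ij by blast
      obtain J where J: "J \<in> max_intervals N LL RR" "{i,j} \<subseteq> J" using PP_in_mi[OF pP] by blast
      have "x \<in> J" using J ij by auto
      hence "J = I" using mi_overlap[OF J(1) I] x by simp
      thus "x \<in> \<Union>{p\<in>PP. p \<subseteq> I}" using J pP ij by blast
    qed
  qed
  show "\<forall>p\<in>{p\<in>PP. p \<subseteq> I}. card p = 2"
  proof
    fix p assume "p \<in> {p\<in>PP. p \<subseteq> I}"
    hence "p \<in> PP" by simp
    then obtain i j where ij: "p = {i,j}" "isp i j" by (rule PPD)
    thus "card p = 2" using ispD(2)[OF ij(2)] by simp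
  qed
  show "\<forall>p\<in>{p\<in>PP. p \<subseteq> I}. \<forall>q\<in>{p\<in>PP. p \<subseteq> I}. p \<noteq> q \<longrightarrow> p \<inter> q = {}"
  proof (intro ballI impI)
    fix p q assume p: "p \<in> {p\<in>PP. p \<subseteq> I}" and q: "q \<in> {p\<in>PP. p \<subseteq> I}" and ne: "p \<noteq> q"
    have "p \<in> PP" "q \<in> PP" using p q by auto
    obtain i j where ij: "p = {i,j}" "isp i j" using PPD[OF \<open>p \<in> PP\<close>] by blast
    obtain i' j' where ij': "q = {i',j'}" "isp i' j'" using PPD[OF \<open>q \<in> PP\<close>] by blast
    show "p \<inter> q = {}"
    proof (rule ccontr)
      assume "p \<inter> q \<noteq> {}"
      then obtain x where x: "x \<in> p" "x \<in> q" by blast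
      have g: "g i = 0" "g j = 1" "g i' = 0" "g j' = 1" using isp_g ij ij' by auto
      have "p = q"
      proof (cases "x = i")
        case True
        show ?thesis
        proof (cases "x = i'")
          case True
          hence "i' = i" using \<open>x = i\<close> by simp
          hence "isp i j'" using ij'(2) by simp
          hence "j = j'" using uniq_r[OF ij(2)] by simp
          thus ?thesis using ij ij' \<open>i' = i\<close> by simp
        next
          case False hence "x = j'" using x ij' by simp
          thus ?thesis using g \<open>x = i\<close> by simp
        qed
      next
        case False hence xj: "x = j" using x ij by simp
        show ?thesis
        proof (cases "x = j'")
          case True
          hence "j' = j" using xj by simp
          hence "isp i' j" using ij'(2) by simp
          hence "i = i'" using uniq_l[OF ij(2)] by simp
          thus ?thesis using ij ij' \<open>j' = j\<close> by simp
        next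
          case False hence "x = i'" using x ij' by simp
          thus ?thesis using g xj by simp
        qed
      qed
      thus False using ne by simp
    qed
  qed
  show "\<not> (\<exists>i j k l. i < j \<and> j < k \<and> k < l \<and> {i, k} \<in> {p\<in>PP. p \<subseteq> I} \<and> {j, l} \<in> {p\<in>PP. p \<subseteq> I})"
  proof
    assume "\<exists>i j k l. i < j \<and> j < k \<and> k < l \<and> {i, k} \<in> {p\<in>PP. p \<subseteq> I} \<and> {j, l} \<in> {p\<in>PP. p \<subseteq> I}"
    then obtain i j k l where h: "i < j" "j < k" "k < l" "{i,k} \<in> PP" "{j,l} \<in> PP" by blast
    have "isp i k" using isp_mem h by simp
    moreover have "isp j l" using isp_mem h by simp
    ultimately show False using noncross[OF _ _ h(1,2,3)] by blast
  qed
qed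

lemma in_ext: "(LL,RR,PP) \<in> ext_link_patterns N"
  unfolding ext_iff
proof (intro conjI ballI)
  show "LL \<subseteq> {1..N}" unfolding LL_def by auto
  show "RR \<subseteq> {1..N}" unfolding RR_def by auto
  show "\<And>l r. l \<in> LL \<Longrightarrow> r \<in> RR \<Longrightarrow> l < r" by (rule LR_order)
  show "\<And>I. I \<in> max_intervals N LL RR \<Longrightarrow> link_pattern I {p\<in>PP. p \<subseteq> I}" by (rule link)
  show "\<And>p. p \<in> PP \<Longrightarrow> \<exists>I\<in>max_intervals N LL RR. p \<subseteq> I" by (rule PP_in_mi)
qed

end

lemma wf01: "wf L R P k \<in> {0,1}" unfolding wf_def by auto

theorem proposition1p6:
  fixes N :: nat
  shows "bij_betw (word N) (ext_link_patterns N) {w :: nat list. length w = N \<and> set w \<subseteq> {0, 1}}"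
  unfolding bij_betw_def
proof (intro conjI)
  show "inj_on (word N) (ext_link_patterns N)" by (rule inj_word)
  show "word N ` ext_link_patterns N = {w :: nat list. length w = N \<and> set w \<subseteq> {0, 1}}"
  proof
    show "word N ` ext_link_patterns N \<subseteq> {w :: nat list. length w = N \<and> set w \<subseteq> {0, 1}}"
    proof
      fix w assume "w \<in> word N ` ext_link_patterns N"
      then obtain L R P where w: "w = word N (L,R,P)" by auto
      have "set w = wf L R P ` set [1..<N+1]" by (simp add: w word_alt del: upt_Suc)
      moreover have "wf L R P ` set [1..<N+1] \<subseteq> {0,1}" using wf01[of L R P] by (intro image_subsetI) simp
      ultimately have "set w \<subseteq> {0,1}" by simp
      moreover have "length w = N" by (simp add: w word_alt del: upt_Suc)
      ultimately show "w \<in> {w :: nat list. length w = N \<and> set w \<subseteq> {0, 1}}" by simp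
    qed
    show "{w :: nat list. length w = N \<and> set w \<subseteq> {0, 1}} \<subseteq> word N ` ext_link_patterns N"
    proof
      fix w :: "nat list" assume w: "w \<in> {w :: nat list. length w = N \<and> set w \<subseteq> {0, 1}}"
      define g where "g = (\<lambda>k. w ! (k-1))"
      have "wd N g"
      proof
        fix k :: nat assume k: "1 \<le> k" "k \<le> N"
        hence "w ! (k-1) \<in> set w" using w by auto
        thus "g k = 0 \<or> g k = 1" using w g_def by auto
      qed
      have "word N (wd.LL N g, wd.RR N g, wd.PP N g) = w"
      proof (rule nth_equalityI)
        show "length (word N (wd.LL N g, wd.RR N g, wd.PP N g)) = length w"
          using w by (simp add: word_alt)
        fix n assume "n < length (word N (wd.LL N g, wd.RR N g, wd.PP N g))"
        hence n: "n < N" by (simp add: word_alt del: upt_Suc)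
        have "word N (wd.LL N g, wd.RR N g, wd.PP N g) ! n
              = wf (wd.LL N g) (wd.RR N g) (wd.PP N g) (n+1)"
          using word_nth[of "n+1" N] n by simp
        also have "\<dots> = g (n+1)" using wd.wf_eq[OF \<open>wd N g\<close>] n by simp
        also have "\<dots> = w ! n" using g_def by simp
        finally show "word N (wd.LL N g, wd.RR N g, wd.PP N g) ! n = w ! n" .
      qed
      moreover have "(wd.LL N g, wd.RR N g, wd.PP N g) \<in> ext_link_patterns N"
        using wd.in_ext[OF \<open>wd N g\<close>] .
      ultimately show "w \<in> word N ` ext_link_patterns N" by (metis image_eqI)
    qed
  qed
qed

end
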